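(* Let $d\ge3$, $\alpha<2$ and $1<q\le\frac{d-\alpha}{d-2}$. Then there is no positive function $u$ on $\mathbb Z^d$ satisfying $\Delta u(x)+(1+|x|)^{-\alpha}u(x)^q\le0$ for all $x\in\mathbb Z^d$.
   Context: $\mathbb Z^d$ is the lattice graph with $\mu_{xy}=1$ if $\|x-y\|_1=1$ and $\mu_{xy}=0$ otherwise, so $\mu(x)=2d$ and $\Delta u(x)=\frac1{2d}\sum_{y:\|y-x\|_1=1}(u(y)-u(x))$. $|x|$ is the Euclidean norm. *)

theory Defs
  imports "HOL-Analysis.Analysis"
begin

text \<open>The lattice Z^d is modelled as int ^ 'd, with d = CARD('d).\<close>

definition l1dist :: "int ^ 'd \<Rightarrow> int ^ 'd \<Rightarrow> int" where
  "l1dist x y = (\<Sum>i\<in>UNIV. \<bar>x $ i - y $ i\<bar>)"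

definition lattice_nbrs :: "int ^ 'd \<Rightarrow> (int ^ 'd) set" where
  "lattice_nbrs x = {y. l1dist x y = 1}"

definition lattice_laplacian :: "(int ^ 'd \<Rightarrow> real) \<Rightarrow> int ^ 'd \<Rightarrow> real" where
  "lattice_laplacian u x =
     (1 / (2 * real CARD('d))) * (\<Sum>y\<in>lattice_nbrs x. u y - u x)"

definition lattice_norm :: "int ^ 'd \<Rightarrow> real" where
  "lattice_norm x = sqrt (\<Sum>i\<in>UNIV. (real_of_int (x $ i))\<^sup>2)"

end

theory Submission
  imports Defs
begin



definition ee :: "'d \<Rightarrow> int ^ 'd" where "ee i = (\<chi> j. if j = i then 1 else 0)"

lemma ee_nth[simp]: "ee i $ j = (if j = i then 1 else 0)"
  by (simp add: ee_def)

lemma l1dist_eq1: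
  fixes x y :: "int ^ 'd"
  shows "l1dist x y = 1 \<longleftrightarrow> (\<exists>i. y = x + ee i \<or> y = x - ee i)"
proof
  assume h: "l1dist x y = 1"
  define z where "z = y - x"
  have hs: "(\<Sum>j\<in>UNIV. \<bar>z $ j\<bar>) = 1"
    using h by (simp add: l1dist_def z_def abs_minus_commute)
  have "\<exists>i. z $ i \<noteq> 0"
  proof (rule ccontr)
    assume "\<not> ?thesis"
    then have "(\<Sum>j\<in>UNIV. \<bar>z $ j\<bar>) = 0" by simp
    with hs show False by simp
  qed
  then obtain i where zi: "z $ i \<noteq> 0" by blast
  have split: "(\<Sum>j\<in>UNIV. \<bar>z $ j\<bar>) = \<bar>z $ i\<bar> + (\<Sum>j\<in>UNIV - {i}. \<bar>z $ j\<bar>)"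
    by (simp add: sum.remove)
  have nn: "(\<Sum>j\<in>UNIV - {i}. \<bar>z $ j\<bar>) \<ge> 0" by (simp add: sum_nonneg)
  have a1: "\<bar>z $ i\<bar> = 1" using hs split nn zi by linarith
  have "(\<Sum>j\<in>UNIV - {i}. \<bar>z $ j\<bar>) = 0" using hs split a1 by linarith
  then have oth: "\<forall>j\<in>UNIV - {i}. \<bar>z $ j\<bar> = 0"
    by (subst sum_nonneg_eq_0_iff[symmetric]) auto
  have "z = ee i \<or> z = - ee i"
  proof (cases "z $ i = 1")
    case True
    then have "z = ee i" using oth by (auto simp: vec_eq_iff)
    then show ?thesis by simp
  next
    case False
    then have "z $ i = -1" using a1 by linarith
    then have "z = - ee i" using oth by (auto simp: vec_eq_iff)
    then show ?thesis by simp
  qed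
  then show "\<exists>i. y = x + ee i \<or> y = x - ee i"
    unfolding z_def by (metis add.commute diff_add_cancel diff_minus_eq_add minus_diff_eq)
next
  assume "\<exists>i. y = x + ee i \<or> y = x - ee i"
  then obtain i where "y = x + ee i \<or> y = x - ee i" by blast
  then have "\<forall>j. \<bar>x $ j - y $ j\<bar> = (if j = i then 1 else 0)" by auto
  then show "l1dist x y = 1" by (simp add: l1dist_def)
qed

lemma nbrs_eq: "lattice_nbrs x = range (\<lambda>i. x + ee i) \<union> range (\<lambda>i. x - ee i)"
  unfolding lattice_nbrs_def using l1dist_eq1 by blast

lemma ee_inj: "ee i = ee j \<Longrightarrow> i = j"
  by (metis ee_nth one_neq_zero)

lemma sum_nbrs:
  fixes f :: "int ^ 'd \<Rightarrow> real"
  shows "(\<Sum>y\<in>lattice_nbrs x. f y) = (\<Sum>i\<in>UNIV. f (x + ee i) + f (x - ee i))"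
proof -
  have disj: "range (\<lambda>i. x + ee i) \<inter> range (\<lambda>i. x - ee (i::'d)) = {}"
  proof (rule ccontr)
    assume "\<not> ?thesis"
    then obtain i j where "x + ee i = x - ee j" by auto
    then have "(x + ee i) $ i = (x - ee j) $ i" by simp
    then show False by (cases "i = j") auto
  qed
  have i1: "inj (\<lambda>i. x + ee i)" by (rule injI) (auto dest: ee_inj)
  have i2: "inj (\<lambda>i. x - ee i)" by (rule injI) (auto dest: ee_inj)
  show ?thesis
    unfolding nbrs_eq
    by (simp add: sum.union_disjoint disj sum.reindex i1 i2 sum.distrib)
qed

lemma lap_eq:
  "lattice_laplacian u x = (1 / (2 * real CARD('d))) *
     (\<Sum>i\<in>(UNIV::'d::finite set). u (x + ee i) + u (x - ee i) - 2 * u x)"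
  unfolding lattice_laplacian_def
  by (subst sum_nbrs[where f = "\<lambda>y. u y - u x"]) (simp add: algebra_simps)



definition GG :: "real \<Rightarrow> real" where
  "GG t = (if t \<le> 1 then 1 else if t \<le> 2 then 1 - (t-1)^2/2 else if t \<le> 3 then (3-t)^2/2 else 0)"
definition DD :: "real \<Rightarrow> real" where
  "DD t = (if t \<le> 1 then 0 else if t \<le> 2 then -(t-1) else if t \<le> 3 then -(3-t) else 0)"

lemma GGc1:
  fixes a b :: real
  assumes "a \<le> 1" and "b \<le> 1"
  shows "GG b \<ge> GG a + DD a * (b - a) - (b - a)^2 / 2"
proof -
  have h1: "0 \<le> (b-a) * (b-a)" by simp
  show ?thesis using assms h1 unfolding GG_def DD_def power2_eq_square by (simp add: field_simps)
qed

lemma GGc2: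
  fixes a b :: real
  assumes "a \<le> 1" and "1 < b" and "b \<le> 2"
  shows "GG b \<ge> GG a + DD a * (b - a) - (b - a)^2 / 2"
proof -
  have h1: "0 \<le> (1-a) * (b-1)" using assms by (intro mult_nonneg_nonneg) simp_all
  have h2: "0 \<le> (1-a) * (b-a)" using assms by (intro mult_nonneg_nonneg) simp_all
  show ?thesis using assms h1 h2 unfolding GG_def DD_def power2_eq_square by (simp add: field_simps)
qed

lemma GGc3:
  fixes a b :: real
  assumes "a \<le> 1" and "2 < b" and "b \<le> 3"
  shows "GG b \<ge> GG a + DD a * (b - a) - (b - a)^2 / 2"
proof -
  have h1: "0 \<le> (1-a) * (b-1)" using assms by (intro mult_nonneg_nonneg) simp_all
  have h2: "0 \<le> (1-a) * (b-a)" using assms by (intro mult_nonneg_nonneg) simp_all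
  have h3: "0 \<le> (b-2) * (b-2)" by simp
  show ?thesis using assms h1 h2 h3 unfolding GG_def DD_def power2_eq_square by (simp add: field_simps)
qed

lemma GGc4:
  fixes a b :: real
  assumes "a \<le> 1" and "3 < b"
  shows "GG b \<ge> GG a + DD a * (b - a) - (b - a)^2 / 2"
proof -
  have h1: "0 \<le> (b-a) * (b-a-2)" using assms by (intro mult_nonneg_nonneg) simp_all
  show ?thesis using assms h1 unfolding GG_def DD_def power2_eq_square by (simp add: field_simps)
qed

lemma GGc5:
  fixes a b :: real
  assumes "1 < a" and "a \<le> 2" and "b \<le> 1"
  shows "GG b \<ge> GG a + DD a * (b - a) - (b - a)^2 / 2"
proof -
  have h1: "0 \<le> (b-1) * (b-1)" by simp
  show ?thesis using assms h1 unfolding GG_def DD_def power2_eq_square by (simp add: field_simps)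
qed

lemma GGc6:
  fixes a b :: real
  assumes "1 < a" and "a \<le> 2" and "1 < b" and "b \<le> 2"
  shows "GG b \<ge> GG a + DD a * (b - a) - (b - a)^2 / 2"
proof -
  show ?thesis using assms  unfolding GG_def DD_def power2_eq_square by (simp add: field_simps)
qed

lemma GGc7:
  fixes a b :: real
  assumes "1 < a" and "a \<le> 2" and "2 < b" and "b \<le> 3"
  shows "GG b \<ge> GG a + DD a * (b - a) - (b - a)^2 / 2"
proof -
  have h1: "0 \<le> (b-2) * (b-2)" by simp
  show ?thesis using assms h1 unfolding GG_def DD_def power2_eq_square by (simp add: field_simps)
qed

lemma GGc8:
  fixes a b :: real
  assumes "1 < a" and "a \<le> 2" and "3 < b"
  shows "GG b \<ge> GG a + DD a * (b - a) - (b - a)^2 / 2"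
proof -
  have h1: "0 \<le> (b-1) * (b-3)" using assms by (intro mult_nonneg_nonneg) simp_all
  show ?thesis using assms h1 unfolding GG_def DD_def power2_eq_square by (simp add: field_simps)
qed

lemma GGc9:
  fixes a b :: real
  assumes "2 < a" and "a \<le> 3" and "b \<le> 1"
  shows "GG b \<ge> GG a + DD a * (b - a) - (b - a)^2 / 2"
proof -
  have h1: "0 \<le> (3-a) * (a-2)" using assms by (intro mult_nonneg_nonneg) simp_all
  have h2: "0 \<le> (3-2*a+b) * (3-2*a+b)" by simp
  show ?thesis using assms h1 h2 unfolding GG_def DD_def power2_eq_square by (simp add: field_simps)
qed

lemma GGc10:
  fixes a b :: real
  assumes "2 < a" and "a \<le> 3" and "1 < b" and "b \<le> 2"
  shows "GG b \<ge> GG a + DD a * (b - a) - (b - a)^2 / 2"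
proof -
  have h1: "0 \<le> (a-2) * (2-b)" using assms by (intro mult_nonneg_nonneg) simp_all
  have h2: "0 \<le> (a-2) * (a-2)" by simp
  show ?thesis using assms h1 h2 unfolding GG_def DD_def power2_eq_square by (simp add: field_simps)
qed

lemma GGc11:
  fixes a b :: real
  assumes "2 < a" and "a \<le> 3" and "2 < b" and "b \<le> 3"
  shows "GG b \<ge> GG a + DD a * (b - a) - (b - a)^2 / 2"
proof -
  have h1: "0 \<le> (a-b) * (a-b)" by simp
  show ?thesis using assms h1 unfolding GG_def DD_def power2_eq_square by (simp add: field_simps)
qed

lemma GGc12:
  fixes a b :: real
  assumes "2 < a" and "a \<le> 3" and "3 < b"
  shows "GG b \<ge> GG a + DD a * (b - a) - (b - a)^2 / 2"
proof -
  have h1: "0 \<le> (b-3) * (9-4*a+b)" using assms by (intro mult_nonneg_nonneg) simp_all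
  have h2: "0 \<le> (3-a) * (3-a)" by simp
  show ?thesis using assms h1 h2 unfolding GG_def DD_def power2_eq_square by (simp add: field_simps)
qed

lemma GGc13:
  fixes a b :: real
  assumes "3 < a" and "b \<le> 1"
  shows "GG b \<ge> GG a + DD a * (b - a) - (b - a)^2 / 2"
proof -
  have h1: "0 \<le> (b-a) * (b-a)" by simp
  show ?thesis using assms h1 unfolding GG_def DD_def power2_eq_square by (simp add: field_simps)
qed

lemma GGc14:
  fixes a b :: real
  assumes "3 < a" and "1 < b" and "b \<le> 2"
  shows "GG b \<ge> GG a + DD a * (b - a) - (b - a)^2 / 2"
proof -
  have h1: "0 \<le> (b-1) * (2-b)" using assms by (intro mult_nonneg_nonneg) simp_all
  have h2: "0 \<le> (b-a) * (b-a)" by simp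
  show ?thesis using assms h1 h2 unfolding GG_def DD_def power2_eq_square by (simp add: field_simps)
qed

lemma GGc15:
  fixes a b :: real
  assumes "3 < a" and "2 < b" and "b \<le> 3"
  shows "GG b \<ge> GG a + DD a * (b - a) - (b - a)^2 / 2"
proof -
  have h1: "0 \<le> (3-b) * (3-b)" by simp
  have h2: "0 \<le> (b-a) * (b-a)" by simp
  show ?thesis using assms h1 h2 unfolding GG_def DD_def power2_eq_square by (simp add: field_simps)
qed

lemma GGc16:
  fixes a b :: real
  assumes "3 < a" and "3 < b"
  shows "GG b \<ge> GG a + DD a * (b - a) - (b - a)^2 / 2"
proof -
  have h1: "0 \<le> (b-a) * (b-a)" by simp
  show ?thesis using assms h1 unfolding GG_def DD_def power2_eq_square by (simp add: field_simps)
qed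


lemma GG_taylor: "GG b \<ge> GG a + DD a * (b - a) - (b - a)^2 / 2"
proof -
  have "a \<le> 1 \<or> (1 < a \<and> a \<le> 2) \<or> (2 < a \<and> a \<le> 3) \<or> 3 < a" by linarith
  moreover have "b \<le> 1 \<or> (1 < b \<and> b \<le> 2) \<or> (2 < b \<and> b \<le> 3) \<or> 3 < b" by linarith
  ultimately show ?thesis
    using GGc1 GGc2 GGc3 GGc4 GGc5 GGc6 GGc7 GGc8 GGc9 GGc10 GGc11 GGc12 GGc13 GGc14 GGc15 GGc16
    by (elim disjE conjE) blast+
qed

lemma GG_le1: "GG t \<le> 1"
proof -
  have a: "(t-1)^2 \<le> 2" if "1 < t" "t \<le> 2" using that power_le_one[of "t-1" 2] by simp
  have b: "(3-t)^2 \<le> 2" if "2 < t" "t \<le> 3" using that power_le_one[of "3-t" 2] by simp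
  show ?thesis unfolding GG_def using a b by auto
qed
lemma GG_nonneg: "0 \<le> GG t"
proof -
  have a: "(t-1)^2 \<le> 2" if "1 < t" "t \<le> 2" using that power_le_one[of "t-1" 2] by simp
  show ?thesis unfolding GG_def using a by auto
qed
lemma GG_one: "t \<le> 1 \<Longrightarrow> GG t = 1" by (simp add: GG_def)
lemma GG_zero: "3 \<le> t \<Longrightarrow> GG t = 0" by (simp add: GG_def)
lemma GG_pos: "t < 3 \<Longrightarrow> 0 < GG t"
proof -
  assume t: "t < 3"
  have a: "(t-1)^2 < 2" if "1 < t" "t \<le> 2" using that power_le_one[of "t-1" 2] by simp
  show ?thesis unfolding GG_def using a t by auto
qed
lemma DD_bounds: "-1 \<le> DD t" "DD t \<le> 0" by (auto simp: DD_def)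

definition Nsq :: "int ^ 'd \<Rightarrow> real" where
  "Nsq x = (\<Sum>i\<in>UNIV. (real_of_int (x $ i))\<^sup>2)"

lemma Nsq_nonneg: "0 \<le> Nsq x" by (simp add: Nsq_def sum_nonneg)
lemma norm_Nsq: "lattice_norm x = sqrt (Nsq x)" by (simp add: lattice_norm_def Nsq_def)
lemma norm_sq: "(lattice_norm x)^2 = Nsq x" using Nsq_nonneg[of x] by (simp add: norm_Nsq)
lemma norm_nonneg': "0 \<le> lattice_norm x" using Nsq_nonneg[of x] by (simp add: norm_Nsq)
lemma coord_sq_le: "(real_of_int (x $ i))^2 \<le> Nsq x"
  unfolding Nsq_def by (rule member_le_sum) auto
lemma coord_le_norm: "\<bar>real_of_int (x $ i)\<bar> \<le> lattice_norm x"
  unfolding norm_Nsq using coord_sq_le[of x i] real_sqrt_le_mono by fastforce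

lemma Nsq_plus: "Nsq (x + ee i) = Nsq x + 2 * real_of_int (x $ i) + 1"
proof -
  have "Nsq (x + ee i) = (\<Sum>j\<in>UNIV. (real_of_int (x $ j))\<^sup>2 + (if j = i then 2 * real_of_int (x $ i) + 1 else 0))"
    unfolding Nsq_def by (rule sum.cong) (auto simp: power2_eq_square algebra_simps)
  then show ?thesis by (simp add: sum.distrib Nsq_def)
qed
lemma Nsq_minus: "Nsq (x - ee i) = Nsq x - 2 * real_of_int (x $ i) + 1"
proof -
  have "Nsq (x - ee i) = (\<Sum>j\<in>UNIV. (real_of_int (x $ j))\<^sup>2 + (if j = i then 1 - 2 * real_of_int (x $ i) else 0))"
    unfolding Nsq_def by (rule sum.cong) (auto simp: power2_eq_square algebra_simps)
  then show ?thesis by (simp add: sum.distrib Nsq_def)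
qed

lemma pow_convex:
  fixes a b :: real
  assumes "0 \<le> a" "0 \<le> b"
  shows "b ^ s \<ge> a ^ s + real s * a ^ (s - 1) * (b - a)"
proof (induction s)
  case 0 then show ?case by simp
next
  case (Suc s)
  have "b ^ Suc s = b * b ^ s" by simp
  also have "\<dots> \<ge> b * (a ^ s + real s * a ^ (s - 1) * (b - a))"
    using Suc.IH assms by (simp add: mult_left_mono)
  finally have h: "b ^ Suc s \<ge> b * (a ^ s + real s * a ^ (s - 1) * (b - a))" .
  have "b * (a ^ s + real s * a ^ (s - 1) * (b - a)) - (a ^ Suc s + real (Suc s) * a ^ (Suc s - 1) * (b - a))
        = real s * a ^ (s - 1) * (b - a)^2"
  proof (cases s)
    case 0 then show ?thesis by (simp add: algebra_simps)
  next
    case (Suc m)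
    then show ?thesis by (simp add: algebra_simps power2_eq_square)
  qed
  moreover have "real s * a ^ (s - 1) * (b - a)^2 \<ge> 0" using assms by simp
  ultimately show ?case using h by linarith
qed




definition boxK :: "int \<Rightarrow> (int ^ 'd) set" where
  "boxK K = {x. \<forall>i. \<bar>x $ i\<bar> \<le> K}"

lemma box_eq: "boxK K = (\<lambda>f. vec_lambda f) ` (PiE UNIV (\<lambda>_. {-K..K}))"
proof
  show "boxK K \<subseteq> (\<lambda>f. vec_lambda f) ` (PiE UNIV (\<lambda>_. {-K..K}))"
  proof
    fix x assume "x \<in> boxK K"
    then have h: "\<bar>x $ i\<bar> \<le> K" for i by (simp add: boxK_def)
    have "-K \<le> x $ i \<and> x $ i \<le> K" for i using h[of i] by linarith
    then have "(\<lambda>i. x $ i) \<in> PiE UNIV (\<lambda>_. {-K..K})" by auto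
    moreover have "x = vec_lambda (\<lambda>i. x $ i)" by simp
    ultimately show "x \<in> (\<lambda>f. vec_lambda f) ` (PiE UNIV (\<lambda>_. {-K..K}))" by blast
  qed
  show "(\<lambda>f. vec_lambda f) ` (PiE UNIV (\<lambda>_. {-K..K})) \<subseteq> boxK K"
  proof
    fix y assume "y \<in> (\<lambda>f. vec_lambda f) ` (PiE UNIV (\<lambda>_. {-K..K}))"
    then obtain f where f: "f \<in> PiE UNIV (\<lambda>_. {-K..K})" "y = vec_lambda f" by blast
    have "f i \<in> {-K..K}" for i using f(1) by auto
    then have "\<bar>y $ i\<bar> \<le> K" for i using f(2) by (simp add: abs_le_iff) (meson atLeastAtMost_iff minus_le_iff)
    then show "y \<in> boxK K" by (simp add: boxK_def)
  qed
qed

lemma box_finite: "finite (boxK K)"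
  unfolding box_eq by (intro finite_imageI finite_PiE) auto

lemma box_card: "K \<ge> 0 \<Longrightarrow> real (card (boxK K :: (int^'d) set)) = (2 * real_of_int K + 1) ^ CARD('d)"
proof -
  assume K: "K \<ge> 0"
  have inj: "inj_on (\<lambda>f. vec_lambda f :: int ^ 'd) (PiE UNIV (\<lambda>_. {-K..K}))"
    by (rule inj_onI) (metis vec_lambda_inverse UNIV_I)
  have "card (boxK K :: (int^'d) set) = card (PiE (UNIV::'d set) (\<lambda>_. {-K..K}))"
    unfolding box_eq by (rule card_image[OF inj])
  also have "\<dots> = (\<Prod>i\<in>(UNIV::'d set). card {-K..K})" by (rule card_PiE) simp
  also have "\<dots> = (nat (2*K+1)) ^ CARD('d)" by simp
  finally show ?thesis using K by simp
qed

lemma holder_sum: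
  fixes c v :: "'a \<Rightarrow> real"
  assumes fin: "finite A" and cpos: "\<And>x. x \<in> A \<Longrightarrow> 0 < c x" and vpos: "\<And>x. x \<in> A \<Longrightarrow> 0 < v x"
    and th: "0 < \<theta>" "\<theta> < 1"
  shows "(\<Sum>x\<in>A. c x powr \<theta> * v x powr (1 - \<theta>)) \<le> (\<Sum>x\<in>A. c x) powr \<theta> * (\<Sum>x\<in>A. v x) powr (1 - \<theta>)"
proof (cases "A = {}")
  case True then show ?thesis by simp
next
  case False
  define C where "C = (\<Sum>x\<in>A. c x)"
  define V where "V = (\<Sum>x\<in>A. v x)"
  have C: "0 < C" unfolding C_def using fin False cpos by (intro sum_pos) auto
  have V: "0 < V" unfolding V_def using fin False vpos by (intro sum_pos) auto
  have each: "(c x / C) powr \<theta> * (v x / V) powr (1 - \<theta>) \<le> \<theta> * (c x / C) + (1 - \<theta>) * (v x / V)"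
    if "x \<in> A" for x
    using Youngs_inequality_0[of \<theta> "1-\<theta>" "c x / C" "v x / V"] th C V cpos[OF that] vpos[OF that] by simp
  have eqt: "(c x / C) powr \<theta> * (v x / V) powr (1 - \<theta>) = (c x powr \<theta> * v x powr (1 - \<theta>)) / (C powr \<theta> * V powr (1 - \<theta>))"
    if "x \<in> A" for x
    using C V cpos[OF that] vpos[OF that] by (simp add: powr_divide)
  have "(\<Sum>x\<in>A. (c x powr \<theta> * v x powr (1 - \<theta>)) / (C powr \<theta> * V powr (1 - \<theta>)))
        \<le> (\<Sum>x\<in>A. \<theta> * (c x / C) + (1 - \<theta>) * (v x / V))"
    using each eqt by (intro sum_mono) simp
  also have "\<dots> = \<theta> * ((\<Sum>x\<in>A. c x) / C) + (1 - \<theta>) * ((\<Sum>x\<in>A. v x) / V)"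
    by (simp add: sum.distrib sum_distrib_left sum_divide_distrib)
  also have "\<dots> = \<theta> * (C / C) + (1 - \<theta>) * (V / V)" by (simp add: C_def V_def)
  also have "\<dots> = 1" using C V by simp
  finally have "(\<Sum>x\<in>A. c x powr \<theta> * v x powr (1 - \<theta>)) / (C powr \<theta> * V powr (1 - \<theta>)) \<le> 1"
    by (simp add: sum_divide_distrib)
  then show ?thesis using C V by (simp add: C_def[symmetric] V_def[symmetric] divide_le_eq)
qed

lemma shift_sum:
  fixes u phi :: "int ^ 'd \<Rightarrow> real" and v :: "int ^ 'd"
  assumes K: "K \<ge> 1" and vb: "\<And>j. \<bar>v $ j\<bar> \<le> 1"
    and supp: "\<And>x. x \<notin> boxK (K - 1) \<Longrightarrow> phi x = 0"
  shows "(\<Sum>x\<in>boxK K. u (x + v) * phi x) = (\<Sum>x\<in>boxK K. u x * phi (x - v))"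
proof -
  have sub1: "boxK (K - 1) \<subseteq> boxK K"
  proof
    fix x assume "x \<in> boxK (K - 1)"
    then have h: "\<bar>x $ i\<bar> \<le> K - 1" for i by (simp only: boxK_def mem_Collect_eq)
    have "\<bar>x $ i\<bar> \<le> K" for i using h[of i] by linarith
    then show "x \<in> boxK K" by (simp add: boxK_def)
  qed
  have sub2: "(\<lambda>x. x + v) ` boxK (K - 1) \<subseteq> boxK K"
  proof
    fix y assume "y \<in> (\<lambda>x. x + v) ` boxK (K - 1)"
    then obtain x where x: "x \<in> boxK (K - 1)" "y = x + v" by blast
    have h: "\<bar>x $ i\<bar> \<le> K - 1" for i using x(1) by (simp only: boxK_def mem_Collect_eq)
    have "\<bar>y $ i\<bar> \<le> K" for i using x(2) h[of i] vb[of i] by simp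
    then show "y \<in> boxK K" by (simp add: boxK_def)
  qed
  have "(\<Sum>x\<in>boxK K. u (x + v) * phi x) = (\<Sum>x\<in>boxK (K - 1). u (x + v) * phi x)"
    by (rule sum.mono_neutral_right[OF box_finite sub1]) (auto simp: supp)
  also have "\<dots> = (\<Sum>y\<in>(\<lambda>x. x + v) ` boxK (K - 1). u y * phi (y - v))"
    by (subst sum.reindex) (auto simp: inj_on_def)
  also have "\<dots> = (\<Sum>x\<in>boxK K. u x * phi (x - v))"
  proof (rule sum.mono_neutral_left[OF box_finite sub2], rule ballI)
    fix y assume "y \<in> boxK K - (\<lambda>x. x + v) ` boxK (K - 1)"
    then have "y - v \<notin> boxK (K - 1)" by (metis DiffD2 diff_add_cancel image_eqI)
    then show "u y * phi (y - v) = 0" by (simp add: supp)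
  qed
  finally show ?thesis .
qed




lemma sbp:
  fixes u phi :: "int ^ 'd \<Rightarrow> real"
  assumes K: "K \<ge> 1" and supp: "\<And>x. x \<notin> boxK (K - 1) \<Longrightarrow> phi x = 0"
  shows "(\<Sum>x\<in>boxK K. lattice_laplacian u x * phi x) = (\<Sum>x\<in>boxK K. u x * lattice_laplacian phi x)"
proof -
  define c where "c = 1 / (2 * real CARD('d))"
  have vb1: "\<bar>ee i $ j\<bar> \<le> 1" for i j :: 'd by simp
  have vb2: "\<bar>(- ee i) $ j\<bar> \<le> 1" for i j :: 'd by simp
  have per_i: "(\<Sum>x\<in>boxK K. (u (x + ee i) + u (x - ee i) - 2 * u x) * phi x)
      = (\<Sum>x\<in>boxK K. u x * (phi (x + ee i) + phi (x - ee i) - 2 * phi x))" for i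
  proof -
    have s1: "(\<Sum>x\<in>boxK K. u (x + ee i) * phi x) = (\<Sum>x\<in>boxK K. u x * phi (x - ee i))"
      by (rule shift_sum[OF K vb1 supp])
    have s2: "(\<Sum>x\<in>boxK K. u (x + - ee i) * phi x) = (\<Sum>x\<in>boxK K. u x * phi (x - - ee i))"
      by (rule shift_sum[OF K vb2 supp])
    have "(\<Sum>x\<in>boxK K. (u (x + ee i) + u (x - ee i) - 2 * u x) * phi x)
       = (\<Sum>x\<in>boxK K. u (x + ee i) * phi x) + (\<Sum>x\<in>boxK K. u (x + - ee i) * phi x) - 2 * (\<Sum>x\<in>boxK K. u x * phi x)"
      by (simp add: algebra_simps sum.distrib sum_subtractf sum_distrib_left)
    also have "\<dots> = (\<Sum>x\<in>boxK K. u x * phi (x - ee i)) + (\<Sum>x\<in>boxK K. u x * phi (x + ee i)) - 2 * (\<Sum>x\<in>boxK K. u x * phi x)"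
      using s1 s2 by simp
    also have "\<dots> = (\<Sum>x\<in>boxK K. u x * (phi (x + ee i) + phi (x - ee i) - 2 * phi x))"
      by (simp add: algebra_simps sum.distrib sum_subtractf sum_distrib_left)
    finally show ?thesis .
  qed
  have "(\<Sum>x\<in>boxK K. lattice_laplacian u x * phi x)
      = c * (\<Sum>x\<in>boxK K. \<Sum>i\<in>UNIV. (u (x + ee i) + u (x - ee i) - 2 * u x) * phi x)"
    unfolding lap_eq c_def by (simp add: sum_distrib_left sum_distrib_right mult.assoc)
  also have "\<dots> = c * (\<Sum>i\<in>UNIV. \<Sum>x\<in>boxK K. (u (x + ee i) + u (x - ee i) - 2 * u x) * phi x)"
    by (subst sum.swap) simp
  also have "\<dots> = c * (\<Sum>i\<in>UNIV. \<Sum>x\<in>boxK K. u x * (phi (x + ee i) + phi (x - ee i) - 2 * phi x))"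
    using per_i by simp
  also have "\<dots> = c * (\<Sum>x\<in>boxK K. \<Sum>i\<in>UNIV. u x * (phi (x + ee i) + phi (x - ee i) - 2 * phi x))"
    by (subst sum.swap) simp
  also have "\<dots> = (\<Sum>x\<in>boxK K. u x * lattice_laplacian phi x)"
    unfolding lap_eq c_def by (simp add: sum_distrib_left mult_ac)
  finally show ?thesis .
qed

definition psi :: "real \<Rightarrow> int ^ 'd \<Rightarrow> real" where
  "psi R x = GG (Nsq x / R^2)"

lemma psi_nonneg: "0 \<le> psi R x" by (simp add: psi_def GG_nonneg)
lemma psi_le1: "psi R x \<le> 1" by (simp add: psi_def GG_le1)

lemma lap_psi_lower:
  fixes x :: "int ^ 'd"
  assumes R: "R \<ge> 1" and N: "Nsq x < 3 * R^2" and d: "CARD('d) \<ge> 3"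
  shows "lattice_laplacian (psi R) x \<ge> - 4 / R^2"
proof -
  define t where "t = 1 / R^2"
  define r where "r = Nsq x * t"
  have t: "t > 0" using R by (simp add: t_def)
  have Rt: "R^2 * t = 1" using R by (simp add: t_def)
  have hterm: "psi R (x + ee i) + psi R (x - ee i) - 2 * psi R x \<ge> - 2 * t - (4 * (real_of_int (x $ i))^2 + 1) * t^2" for i
  proof -
    define y where "y = real_of_int (x $ i)"
    have e1: "psi R (x + ee i) = GG (r + (2*y+1)*t)"
      unfolding psi_def Nsq_plus r_def t_def y_def using R by (intro arg_cong[where f=GG]) (simp add: field_simps)
    have e2: "psi R (x - ee i) = GG (r + (1 - 2*y)*t)"
      unfolding psi_def Nsq_minus r_def t_def y_def using R by (intro arg_cong[where f=GG]) (simp add: field_simps)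
    have e0: "psi R x = GG r" unfolding psi_def r_def t_def using R by (intro arg_cong[where f=GG]) (simp add: field_simps)
    have g1: "GG (r + (2*y+1)*t) \<ge> GG r + DD r * ((2*y+1)*t) - ((2*y+1)*t)^2/2"
      using GG_taylor[of r "r + (2*y+1)*t"] by simp
    have g2: "GG (r + (1 - 2*y)*t) \<ge> GG r + DD r * ((1 - 2*y)*t) - ((1 - 2*y)*t)^2/2"
      using GG_taylor[of r "r + (1 - 2*y)*t"] by simp
    have "DD r * ((2*y+1)*t) + DD r * ((1 - 2*y)*t) = 2 * t * DD r" by (simp add: algebra_simps)
    moreover have "2 * t * DD r \<ge> - 2 * t" using DD_bounds[of r] t mult_left_mono[of "-1" "DD r" t] by simp
    moreover have "((2*y+1)*t)^2/2 + ((1 - 2*y)*t)^2/2 = (4 * y^2 + 1) * t^2"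
      by (simp add: power2_eq_square field_simps)
    ultimately show ?thesis using g1 g2 e0 e1 e2 unfolding y_def by linarith
  qed
  have sumN: "(\<Sum>i\<in>UNIV. (4 * (real_of_int (x $ i))^2 + 1)) = 4 * Nsq x + real CARD('d)"
    by (simp add: sum.distrib Nsq_def sum_distrib_left)
  have "(\<Sum>i\<in>(UNIV::'d set). psi R (x + ee i) + psi R (x - ee i) - 2 * psi R x)
      \<ge> (\<Sum>i\<in>(UNIV::'d set). - 2 * t - (4 * (real_of_int (x $ i))^2 + 1) * t^2)"
    by (rule sum_mono) (rule hterm)
  also have "(\<Sum>i\<in>(UNIV::'d set). - 2 * t - (4 * (real_of_int (x $ i))^2 + 1) * t^2)
      = - 2 * t * real CARD('d) - (4 * Nsq x + real CARD('d)) * t^2"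
    using sumN by (simp add: sum_subtractf sum_distrib_right[symmetric])
  finally have S: "(\<Sum>i\<in>(UNIV::'d set). psi R (x + ee i) + psi R (x - ee i) - 2 * psi R x)
      \<ge> - 2 * t * real CARD('d) - (4 * Nsq x + real CARD('d)) * t^2" .
  have bnd: "(4 * Nsq x + real CARD('d)) * t^2 \<le> 6 * real CARD('d) * t"
  proof -
    have "3 * R^2 \<le> real CARD('d) * R^2" using d by (intro mult_right_mono) auto
    then have h1: "4 * Nsq x \<le> 4 * (real CARD('d) * R^2)" using N by linarith
    have "1 \<le> R^2" using R by (simp add: one_le_power)
    then have h2: "real CARD('d) * 1 \<le> real CARD('d) * R^2" by (intro mult_left_mono) auto
    have h3: "0 \<le> real CARD('d) * R^2" by simp
    have "4 * Nsq x + real CARD('d) \<le> 6 * (real CARD('d) * R^2)" using h1 h2 h3 by linarith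
    then have "4 * Nsq x + real CARD('d) \<le> 6 * real CARD('d) * R^2" by (simp add: mult.assoc)
    then have "(4 * Nsq x + real CARD('d)) * t^2 \<le> 6 * real CARD('d) * R^2 * t^2"
      using t by (simp add: mult_right_mono)
    also have "\<dots> = 6 * real CARD('d) * t" using Rt by (simp add: power2_eq_square algebra_simps)
    finally show ?thesis .
  qed
  have cpos: "real CARD('d) > 0" by simp
  have S2: "(\<Sum>i\<in>(UNIV::'d set). psi R (x + ee i) + psi R (x - ee i) - 2 * psi R x)
      \<ge> - 2 * t * real CARD('d) - 6 * real CARD('d) * t" using S bnd by linarith
  have "lattice_laplacian (psi R) x = (\<Sum>i\<in>(UNIV::'d set). psi R (x + ee i) + psi R (x - ee i) - 2 * psi R x) / (2 * real CARD('d))"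
    by (simp add: lap_eq)
  also have "\<dots> \<ge> (- 2 * t * real CARD('d) - 6 * real CARD('d) * t) / (2 * real CARD('d))"
    using S2 cpos by (intro divide_right_mono) auto
  finally have "lattice_laplacian (psi R) x \<ge> (- 2 * t * real CARD('d) - 6 * real CARD('d) * t) / (2 * real CARD('d))" .
  also have "(- 2 * t * real CARD('d) - 6 * real CARD('d) * t) / (2 * real CARD('d)) = - 4 * t"
    using cpos by (simp add: field_simps)
  finally show ?thesis by (simp add: t_def)
qed

lemma lap_psi_zero:
  fixes x :: "int ^ 'd"
  assumes R: "R \<ge> 1" and nx: "lattice_norm x \<le> R - 1"
  shows "lattice_laplacian (psi R) x = 0"
proof -
  define L where "L = lattice_norm x"
  have L0: "0 \<le> L" by (simp add: L_def norm_nonneg')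
  have NL: "Nsq x = L^2" by (simp add: L_def norm_sq)
  have LR: "(L + 1)^2 \<le> R^2" using nx L0 unfolding L_def[symmetric] by (intro power_mono) auto
  have R2: "R^2 > 0" using R by simp
  have one: "psi R z = 1" if "Nsq z \<le> R^2" for z
    unfolding psi_def using that R2 by (intro GG_one) simp
  have "psi R (x + ee i) = 1" for i
  proof (rule one)
    have "\<bar>real_of_int (x $ i)\<bar> \<le> L" using coord_le_norm L_def by simp
    then have "Nsq (x + ee i) \<le> L^2 + 2 * L + 1" unfolding Nsq_plus NL by linarith
    also have "\<dots> = (L+1)^2" by (simp add: power2_eq_square algebra_simps)
    finally show "Nsq (x + ee i) \<le> R^2" using LR by linarith
  qed
  moreover have "psi R (x - ee i) = 1" for i
  proof (rule one)
    have "\<bar>real_of_int (x $ i)\<bar> \<le> L" using coord_le_norm L_def by simp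
    then have "Nsq (x - ee i) \<le> L^2 + 2 * L + 1" unfolding Nsq_minus NL by linarith
    also have "\<dots> = (L+1)^2" by (simp add: power2_eq_square algebra_simps)
    finally show "Nsq (x - ee i) \<le> R^2" using LR by linarith
  qed
  moreover have "psi R x = 1"
  proof (rule one)
    have "L^2 \<le> (L+1)^2" using L0 by (intro power_mono) auto
    then show "Nsq x \<le> R^2" using LR NL by linarith
  qed
  ultimately show ?thesis by (simp add: lap_eq)
qed

lemma lap_pow_convex:
  fixes f :: "int ^ 'd \<Rightarrow> real"
  assumes nn: "\<And>y. 0 \<le> f y"
  shows "lattice_laplacian (\<lambda>y. f y ^ s) x \<ge> real s * f x ^ (s - 1) * lattice_laplacian f x"
proof -
  have "(\<Sum>i\<in>(UNIV::'d set). f (x + ee i) ^ s + f (x - ee i) ^ s - 2 * f x ^ s)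
      \<ge> (\<Sum>i\<in>(UNIV::'d set). real s * f x ^ (s - 1) * (f (x + ee i) + f (x - ee i) - 2 * f x))"
  proof (rule sum_mono)
    fix i
    have "f (x + ee i) ^ s \<ge> f x ^ s + real s * f x ^ (s - 1) * (f (x + ee i) - f x)"
      using pow_convex nn by blast
    moreover have "f (x - ee i) ^ s \<ge> f x ^ s + real s * f x ^ (s - 1) * (f (x - ee i) - f x)"
      using pow_convex nn by blast
    ultimately show "real s * f x ^ (s - 1) * (f (x + ee i) + f (x - ee i) - 2 * f x)
        \<le> f (x + ee i) ^ s + f (x - ee i) ^ s - 2 * f x ^ s"
      by (simp add: algebra_simps)
  qed
  then have "(\<Sum>i\<in>(UNIV::'d set). f (x + ee i) ^ s + f (x - ee i) ^ s - 2 * f x ^ s) / (2 * real CARD('d))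
      \<ge> (\<Sum>i\<in>(UNIV::'d set). real s * f x ^ (s - 1) * (f (x + ee i) + f (x - ee i) - 2 * f x)) / (2 * real CARD('d))"
    by (intro divide_right_mono) auto
  then show ?thesis
    by (simp add: lap_eq sum_distrib_left[symmetric] mult.assoc)
qed




locale LV =
  fixes u :: "int ^ 'd \<Rightarrow> real" and \<alpha> q :: real and s :: nat
  assumes d3: "CARD('d) \<ge> 3" and q1: "1 < q"
    and upos: "\<And>x. u x > 0"
    and ineq: "\<And>x. lattice_laplacian u x + (1 + lattice_norm x) powr (- \<alpha>) * (u x) powr q \<le> 0"
    and s2: "s \<ge> 2" and sq: "real s * (q - 1) \<ge> q"
begin

definition aa :: "int ^ 'd \<Rightarrow> real" where
  "aa x = (1 + lattice_norm x) powr (- \<alpha>) * (u x) powr q"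

definition phi :: "nat \<Rightarrow> int ^ 'd \<Rightarrow> real" where
  "phi n x = psi (real n) x ^ s"

definition Aset :: "nat \<Rightarrow> (int ^ 'd) set" where
  "Aset n = {x. real n - 1 < lattice_norm x \<and> Nsq x < 3 * (real n)^2}"

lemma aa_pos: "0 < aa x"
  using upos[of x] norm_nonneg'[of x] by (simp add: aa_def)

lemma aa_le: "aa x \<le> - lattice_laplacian u x"
  using ineq[of x] by (simp add: aa_def)

lemma phi_nonneg: "0 \<le> phi n x" by (simp add: phi_def psi_nonneg)
lemma phi_le1: "phi n x \<le> 1" by (simp add: phi_def psi_nonneg psi_le1 power_le_one)

lemma psi_zero_big: "n \<ge> 1 \<Longrightarrow> Nsq x \<ge> 3 * (real n)^2 \<Longrightarrow> psi (real n) x = 0"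
  unfolding psi_def by (intro GG_zero) (simp add: field_simps)

lemma psi_pos_small: "n \<ge> 1 \<Longrightarrow> Nsq x < 3 * (real n)^2 \<Longrightarrow> 0 < psi (real n) x"
  unfolding psi_def by (intro GG_pos) (simp add: field_simps)

lemma psi_one_small: "n \<ge> 1 \<Longrightarrow> lattice_norm x \<le> real n \<Longrightarrow> psi (real n) x = 1"
proof -
  assume n: "n \<ge> 1" and h: "lattice_norm x \<le> real n"
  have "(lattice_norm x)^2 \<le> (real n)^2" using h norm_nonneg'[of x] by (intro power_mono) auto
  then have "Nsq x \<le> (real n)^2" by (simp add: norm_sq)
  then show ?thesis unfolding psi_def using n by (intro GG_one) (simp add: field_simps)
qed

lemma coord_bound:
  assumes "Nsq x < 3 * (real n)^2"
  shows "\<bar>x $ i\<bar> < 2 * int n"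
proof -
  have h: "(real_of_int (x $ i))^2 < 4 * (real n)^2" using coord_sq_le[of x i] assms zero_le_power2[of "real n"] by linarith
  have "(real_of_int (x $ i))^2 < (2 * real n)^2" using h by (simp add: power_mult_distrib)
  then have "\<bar>real_of_int (x $ i)\<bar> < 2 * real n" using power2_less_imp_less[of "\<bar>real_of_int (x $ i)\<bar>" "2 * real n"] by simp
  then show ?thesis by linarith
qed

lemma Aset_sub: "Aset n \<subseteq> boxK (2 * int n)"
  unfolding Aset_def boxK_def using coord_bound by (auto intro: less_imp_le)

lemma Aset_fin: "finite (Aset n)"
  using Aset_sub box_finite finite_subset by blast

lemma phi_supp: "n \<ge> 1 \<Longrightarrow> x \<notin> boxK (2 * int n + 1) \<Longrightarrow> phi n x = 0"
proof -
  assume n: "n \<ge> 1" and x: "x \<notin> boxK (2 * int n + 1)"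
  have "Nsq x \<ge> 3 * (real n)^2"
  proof (rule ccontr)
    assume "\<not> ?thesis"
    then have "\<bar>x $ i\<bar> < 2 * int n" for i using coord_bound[of x n] by (simp add: not_le)
    then have "x \<in> boxK (2 * int n + 1)" unfolding boxK_def by (simp add: less_imp_le)
    with x show False by simp
  qed
  then show ?thesis using n s2 by (simp add: phi_def psi_zero_big)
qed

lemma lap_phi_bound:
  assumes n: "n \<ge> 1"
  shows "- lattice_laplacian (phi n) x \<le> 4 * real s / (real n)^2 * psi (real n) x ^ (s - 1) * (if x \<in> Aset n then 1 else 0)"
proof -
  have conv: "lattice_laplacian (phi n) x \<ge> real s * psi (real n) x ^ (s - 1) * lattice_laplacian (psi (real n)) x"
    unfolding phi_def using lap_pow_convex[of "psi (real n)" s x] psi_nonneg by blast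
  have R: "real n \<ge> 1" using n by simp
  show ?thesis
  proof (cases "lattice_norm x \<le> real n - 1")
    case True
    then have "lattice_laplacian (psi (real n)) x = 0" using lap_psi_zero[OF R] by blast
    then have "lattice_laplacian (phi n) x \<ge> 0" using conv by simp
    moreover have "0 \<le> 4 * real s / (real n)^2 * psi (real n) x ^ (s - 1) * (if x \<in> Aset n then 1 else 0)"
      using psi_nonneg[of "real n" x] by (auto intro!: divide_nonneg_nonneg mult_nonneg_nonneg zero_le_power)
    ultimately show ?thesis by linarith
  next
    case F1: False
    show ?thesis
    proof (cases "Nsq x \<ge> 3 * (real n)^2")
      case True
      then have "psi (real n) x = 0" using psi_zero_big n by blast
      then have z: "psi (real n) x ^ (s - 1) = 0" using s2 by simp
      have "lattice_laplacian (phi n) x \<ge> 0" using conv by (simp only: z)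
      moreover have "0 \<le> 4 * real s / (real n)^2 * psi (real n) x ^ (s - 1) * (if x \<in> Aset n then 1 else 0)"
        using psi_nonneg[of "real n" x] by (auto intro!: divide_nonneg_nonneg mult_nonneg_nonneg zero_le_power)
      ultimately show ?thesis by linarith
    next
      case False
      then have xA: "x \<in> Aset n" using F1 by (simp add: Aset_def)
      have lb: "lattice_laplacian (psi (real n)) x \<ge> - 4 / (real n)^2"
        using lap_psi_lower[OF R _ d3] False by simp
      have pn: "0 \<le> real s * psi (real n) x ^ (s - 1)" using psi_nonneg[of "real n" x] by simp
      have "real s * psi (real n) x ^ (s - 1) * lattice_laplacian (psi (real n)) x
          \<ge> real s * psi (real n) x ^ (s - 1) * (- 4 / (real n)^2)"
        using lb pn by (rule mult_left_mono)
      then show ?thesis using conv xA by (simp add: field_simps)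
    qed
  qed
qed

end



lemma box_mono: "K \<le> L \<Longrightarrow> boxK K \<subseteq> boxK L"
proof
  fix x assume KL: "K \<le> L" and "x \<in> boxK K"
  then have h: "\<bar>x $ i\<bar> \<le> K" for i by (simp add: boxK_def)
  have "\<bar>x $ i\<bar> \<le> L" for i using h[of i] KL by linarith
  then show "x \<in> boxK L" by (simp add: boxK_def)
qed

lemma powr_ident:
  fixes W U p q \<alpha> :: real
  assumes W: "W > 0" and U: "U > 0" and p: "p > 0" and q: "q > 1"
  shows "(W powr (- \<alpha>) * U powr q * p ^ s) powr (1/q) * (W powr (\<alpha> / (q - 1))) powr (1 - 1/q)
         = U * p powr (real s / q)"
proof -
  have "(W powr (- \<alpha>) * U powr q * p ^ s) powr (1/q)
      = (W powr (- \<alpha>)) powr (1/q) * (U powr q) powr (1/q) * (p powr real s) powr (1/q)"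
    using W U p by (simp add: powr_mult powr_realpow)
  also have "\<dots> = W powr (- \<alpha> / q) * U * p powr (real s / q)"
    using q U by (simp add: powr_powr)
  finally have e1: "(W powr (- \<alpha>) * U powr q * p ^ s) powr (1/q) = W powr (- \<alpha> / q) * U * p powr (real s / q)" .
  have e2: "(W powr (\<alpha> / (q - 1))) powr (1 - 1/q) = W powr (\<alpha> / q)"
  proof -
    have "\<alpha> / (q - 1) * (1 - 1/q) = \<alpha> / q" using q by (simp add: field_simps)
    then show ?thesis by (simp add: powr_powr)
  qed
  have "W powr (- \<alpha> / q) * W powr (\<alpha> / q) = 1"
    using W by (simp add: powr_add[symmetric])
  then show ?thesis unfolding e1 e2
    by (metis (no_types, lifting) mult.assoc mult.commute mult.left_neutral)
qed

context LV begin

definition II :: "nat \<Rightarrow> real" where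
  "II n = (\<Sum>x\<in>boxK (2 * int n + 2). aa x * phi n x)"

definition JJ :: "nat \<Rightarrow> real" where
  "JJ n = (\<Sum>x\<in>Aset n. aa x * phi n x)"

definition vv :: "int ^ 'd \<Rightarrow> real" where
  "vv x = (1 + lattice_norm x) powr (\<alpha> / (q - 1))"

lemma est_I:
  assumes n: "n \<ge> 1"
  shows "II n \<le> 4 * real s / (real n)^2 * (\<Sum>x\<in>Aset n. u x * psi (real n) x ^ (s - 1))"
proof -
  define B :: "(int ^ 'd) set" where "B = boxK (2 * int n + 2)"
  have K: "2 * int n + 2 \<ge> 1" by simp
  have supp: "\<And>x. x \<notin> boxK (2 * int n + 2 - 1) \<Longrightarrow> phi n x = 0"
    using phi_supp[OF n] by (simp add: algebra_simps)
  have "II n \<le> (\<Sum>x\<in>B. (- lattice_laplacian u x) * phi n x)"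
    unfolding II_def B_def by (intro sum_mono mult_right_mono aa_le phi_nonneg)
  also have "\<dots> = - (\<Sum>x\<in>B. lattice_laplacian u x * phi n x)"
    by (simp add: sum_negf)
  also have "(\<Sum>x\<in>B. lattice_laplacian u x * phi n x) = (\<Sum>x\<in>B. u x * lattice_laplacian (phi n) x)"
    unfolding B_def by (rule sbp[OF K supp])
  also have "- (\<Sum>x\<in>B. u x * lattice_laplacian (phi n) x) = (\<Sum>x\<in>B. u x * (- lattice_laplacian (phi n) x))"
    by (simp add: sum_negf)
  also have "\<dots> \<le> (\<Sum>x\<in>B. u x * (4 * real s / (real n)^2 * psi (real n) x ^ (s - 1) * (if x \<in> Aset n then 1 else 0)))"
    by (intro sum_mono mult_left_mono lap_phi_bound[OF n]) (simp add: less_imp_le upos)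
  also have "\<dots> = (\<Sum>x\<in>B. if x \<in> Aset n then 4 * real s / (real n)^2 * (u x * psi (real n) x ^ (s - 1)) else 0)"
    by (intro sum.cong) auto
  also have "\<dots> = (\<Sum>x\<in>B \<inter> Aset n. 4 * real s / (real n)^2 * (u x * psi (real n) x ^ (s - 1)))"
    by (rule sum.inter_restrict[symmetric]) (simp add: B_def box_finite)
  also have "B \<inter> Aset n = Aset n"
  proof -
    have "boxK (2 * int n) \<subseteq> B" unfolding B_def by (rule box_mono) simp
    then show ?thesis using Aset_sub by blast
  qed
  finally show ?thesis by (simp add: sum_distrib_left)
qed

lemma est_holder:
  assumes n: "n \<ge> 1"
  shows "(\<Sum>x\<in>Aset n. u x * psi (real n) x ^ (s - 1)) \<le> JJ n powr (1/q) * (\<Sum>x\<in>Aset n. vv x) powr (1 - 1/q)"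
proof -
  have pw: "u x * psi (real n) x ^ (s - 1) \<le> (aa x * phi n x) powr (1/q) * vv x powr (1 - 1/q)"
    if xA: "x \<in> Aset n" for x
  proof -
    have p0: "0 < psi (real n) x" using xA psi_pos_small[OF n, of x] by (simp add: Aset_def)
    have p1: "psi (real n) x \<le> 1" by (rule psi_le1)
    have ex: "real s / q \<le> real (s - 1)"
    proof -
      have "real s \<le> q * (real s - 1)" using sq by (simp add: algebra_simps)
      then have "real s / q \<le> real s - 1" using q1 by (simp add: divide_le_eq mult.commute)
      then show ?thesis using s2 by (simp add: of_nat_diff)
    qed
    have "psi (real n) x ^ (s - 1) = psi (real n) x powr real (s - 1)" using p0 by (simp add: powr_realpow)
    also have "\<dots> \<le> psi (real n) x powr (real s / q)" using ex p0 p1 by (intro powr_mono') auto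
    finally have "u x * psi (real n) x ^ (s - 1) \<le> u x * psi (real n) x powr (real s / q)"
      using upos[of x] by (simp add: mult_left_mono)
    also have "\<dots> = (aa x * phi n x) powr (1/q) * vv x powr (1 - 1/q)"
      unfolding aa_def phi_def vv_def
      using powr_ident[of "1 + lattice_norm x" "u x" "psi (real n) x" q \<alpha> s] norm_nonneg'[of x] upos[of x] p0 q1
      by (simp add: mult.assoc)
    finally show ?thesis .
  qed
  have "(\<Sum>x\<in>Aset n. u x * psi (real n) x ^ (s - 1)) \<le> (\<Sum>x\<in>Aset n. (aa x * phi n x) powr (1/q) * vv x powr (1 - 1/q))"
    using pw by (rule sum_mono)
  also have "\<dots> \<le> (\<Sum>x\<in>Aset n. aa x * phi n x) powr (1/q) * (\<Sum>x\<in>Aset n. vv x) powr (1 - 1/q)"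
  proof (rule holder_sum[OF Aset_fin])
    show "0 < aa x * phi n x" if "x \<in> Aset n" for x
      using that aa_pos[of x] psi_pos_small[OF n, of x] unfolding phi_def Aset_def by simp
    show "0 < vv x" for x using norm_nonneg'[of x] by (simp add: vv_def)
    show "0 < 1/q" "1/q < 1" using q1 by auto
  qed
  finally show ?thesis unfolding JJ_def .
qed

end



context LV begin

lemma Aset_norm:
  assumes n: "n \<ge> 1" and xA: "x \<in> Aset n"
  shows "real n - 1 < lattice_norm x" "lattice_norm x < 2 * real n"
proof -
  show "real n - 1 < lattice_norm x" using xA by (simp add: Aset_def)
  have h: "Nsq x < 3 * (real n)^2" using xA by (simp add: Aset_def)
  have "Nsq x < 4 * (real n)^2" using h zero_le_power2[of "real n"] by linarith
  then have "(lattice_norm x)^2 < (2 * real n)^2" by (simp add: norm_sq power_mult_distrib)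
  then show "lattice_norm x < 2 * real n"
    using power2_less_imp_less[of "lattice_norm x" "2 * real n"] by simp
qed

lemma est_v:
  assumes n: "n \<ge> 1"
  shows "(\<Sum>x\<in>Aset n. vv x) \<le> (4 * real n + 1) ^ CARD('d) * (3 powr \<bar>\<alpha> / (q - 1)\<bar> * real n powr (\<alpha> / (q - 1)))"
proof -
  define b where "b = \<alpha> / (q - 1)"
  have pw: "vv x \<le> 3 powr \<bar>b\<bar> * real n powr b" if xA: "x \<in> Aset n" for x
  proof -
    define W where "W = 1 + lattice_norm x"
    have W1: "real n < W" using Aset_norm(1)[OF n xA] by (simp add: W_def)
    have W2: "W \<le> 3 * real n" using Aset_norm(2)[OF n xA] n by (simp add: W_def)
    have n0: "real n > 0" using n by simp
    have vW: "vv x = W powr b" by (simp add: vv_def W_def b_def)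
    show ?thesis
    proof (cases "b \<ge> 0")
      case True
      have "W powr b \<le> (3 * real n) powr b" using True W1 W2 n0 by (intro powr_mono2) auto
      also have "\<dots> = 3 powr b * real n powr b" by (simp add: powr_mult)
      also have "\<dots> \<le> 3 powr \<bar>b\<bar> * real n powr b" using True by simp
      finally show ?thesis using vW by simp
    next
      case False
      have "W powr b \<le> real n powr b" using False W1 n0 by (intro powr_mono2') auto
      also have "\<dots> \<le> 3 powr \<bar>b\<bar> * real n powr b"
      proof -
        have "1 \<le> 3 powr \<bar>b\<bar>" by (simp add: ge_one_powr_ge_zero)
        then show ?thesis using mult_right_mono[of 1 "3 powr \<bar>b\<bar>" "real n powr b"] by simp
      qed
      finally show ?thesis using vW by simp
    qed
  qed
  have "(\<Sum>x\<in>Aset n. vv x) \<le> real (card (Aset n)) * (3 powr \<bar>b\<bar> * real n powr b)"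
    using pw by (rule sum_bounded_above)
  also have "\<dots> \<le> (4 * real n + 1) ^ CARD('d) * (3 powr \<bar>b\<bar> * real n powr b)"
  proof (rule mult_right_mono)
    have "card (Aset n) \<le> card (boxK (2 * int n) :: (int ^ 'd) set)"
      by (rule card_mono[OF box_finite Aset_sub])
    then have "real (card (Aset n)) \<le> real (card (boxK (2 * int n) :: (int ^ 'd) set))" by simp
    also have "\<dots> = (4 * real n + 1) ^ CARD('d)" using box_card[of "2 * int n"] by simp
    finally show "real (card (Aset n)) \<le> (4 * real n + 1) ^ CARD('d)" .
  qed simp
  finally show ?thesis by (simp add: b_def)
qed

lemma est_final:
  assumes hq: "q \<le> (real CARD('d) - \<alpha>) / (real CARD('d) - 2)"
  shows "\<exists>K>0. \<forall>n\<ge>1. II n \<le> K * JJ n powr (1/q)"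
proof -
  define b where "b = \<alpha> / (q - 1)"
  define d where "d = real CARD('d)"
  define C1 where "C1 = 5 ^ CARD('d) * 3 powr \<bar>b\<bar>"
  define e where "e = -2 + (d + b) * (1 - 1/q)"
  define K where "K = 4 * real s * C1 powr (1 - 1/q)"
  have C1: "C1 > 0" by (simp add: C1_def)
  have K: "K > 0" using C1 s2 by (simp add: K_def)
  have d2: "d - 2 > 0" using d3 by (simp add: d_def)
  have e0: "e \<le> 0"
  proof -
    have "q * (d - 2) \<le> d - \<alpha>" using hq d2 by (simp add: d_def pos_le_divide_eq)
    then have "d * (q - 1) + \<alpha> \<le> 2 * q" by (simp add: algebra_simps)
    then have "(d * (q - 1) + \<alpha>) / q \<le> 2" using q1 by (simp add: divide_le_eq)
    moreover have "(d + b) * (1 - 1/q) = (d * (q - 1) + \<alpha>) / q" using q1 by (simp add: b_def field_simps)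
    ultimately show ?thesis by (simp add: e_def)
  qed
  have main: "II n \<le> K * JJ n powr (1/q)" if n: "n \<ge> 1" for n
  proof -
    have n0: "real n > 0" using n by simp
    have n1: "real n \<ge> 1" using n by simp
    define S where "S = (\<Sum>x\<in>Aset n. vv x)"
    have S0: "S \<ge> 0" unfolding S_def vv_def by (intro sum_nonneg) simp
    have "S \<le> (4 * real n + 1) ^ CARD('d) * (3 powr \<bar>b\<bar> * real n powr b)"
      using est_v[OF n] by (simp add: S_def b_def)
    also have "\<dots> \<le> (5 * real n) ^ CARD('d) * (3 powr \<bar>b\<bar> * real n powr b)"
      using n1 by (intro mult_right_mono power_mono) auto
    also have "\<dots> = C1 * real n powr (d + b)"
      using n0 by (simp add: C1_def d_def powr_add powr_realpow power_mult_distrib)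
    finally have Sb: "S \<le> C1 * real n powr (d + b)" .
    have "S powr (1 - 1/q) \<le> (C1 * real n powr (d + b)) powr (1 - 1/q)"
      using Sb S0 q1 by (intro powr_mono2) auto
    also have "\<dots> = C1 powr (1 - 1/q) * real n powr ((d + b) * (1 - 1/q))"
      using C1 n0 by (simp add: powr_mult powr_powr)
    finally have Sp: "S powr (1 - 1/q) \<le> C1 powr (1 - 1/q) * real n powr ((d + b) * (1 - 1/q))" .
    have J0: "JJ n powr (1/q) \<ge> 0" by simp
    have "II n \<le> 4 * real s / (real n)^2 * (JJ n powr (1/q) * S powr (1 - 1/q))"
      using est_I[OF n] est_holder[OF n] unfolding S_def
      by (smt (verit) divide_nonneg_nonneg mult_left_mono of_nat_0_le_iff zero_le_power2)
    also have "\<dots> \<le> 4 * real s / (real n)^2 * (JJ n powr (1/q) * (C1 powr (1 - 1/q) * real n powr ((d + b) * (1 - 1/q))))"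
      using Sp J0 by (intro mult_left_mono) auto
    also have "\<dots> = K * JJ n powr (1/q) * (real n powr e)"
    proof -
      have "4 * real s / (real n)^2 = 4 * real s * real n powr (-2)"
        using n0 by (simp add: powr_minus powr_realpow divide_inverse)
      moreover have "real n powr (-2) * real n powr ((d + b) * (1 - 1/q)) = real n powr e"
        unfolding e_def by (rule powr_add[symmetric])
      ultimately show ?thesis by (simp add: K_def mult_ac)
    qed
    also have "\<dots> \<le> K * JJ n powr (1/q) * 1"
    proof (rule mult_left_mono)
      show "real n powr e \<le> 1" using n1 e0 by (metis powr_mono powr_zero_eq_one not_one_le_zero order.trans zero_le_one)
      show "0 \<le> K * JJ n powr (1/q)" using K by simp
    qed
    finally show ?thesis by simp
  qed
  show ?thesis using K main by blast
qed

end



context LV begin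

definition Sset :: "nat \<Rightarrow> (int ^ 'd) set" where
  "Sset m = {x. lattice_norm x \<le> real m}"

definition PP :: "nat \<Rightarrow> real" where
  "PP m = (\<Sum>x\<in>Sset m. aa x)"

lemma Sset_sub: "Sset m \<subseteq> boxK (int m)"
proof
  fix x assume "x \<in> Sset m"
  then have h: "\<bar>real_of_int (x $ i)\<bar> \<le> real m" for i using coord_le_norm[of x i] by (simp add: Sset_def)
  have "\<bar>x $ i\<bar> \<le> int m" for i
  proof -
    have "real_of_int \<bar>x $ i\<bar> \<le> real_of_int (int m)" using h[of i] by simp
    then show ?thesis by (simp only: of_int_le_iff)
  qed
  then show "x \<in> boxK (int m)" by (simp add: boxK_def)
qed

lemma Sset_fin: "finite (Sset m)" using Sset_sub box_finite finite_subset by blast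

lemma PP_mono: "m \<le> m' \<Longrightarrow> PP m \<le> PP m'"
  unfolding PP_def
  by (rule sum_mono2[OF Sset_fin]) (auto simp: Sset_def less_imp_le aa_pos)

lemma zero_in_Sset: "0 \<in> Sset m"
  by (simp add: Sset_def lattice_norm_def)

lemma PP_ge: "aa 0 \<le> PP m"
  unfolding PP_def using zero_in_Sset[of m] Sset_fin[of m]
  by (intro member_le_sum) (auto simp: less_imp_le aa_pos)

lemma PP_le_II: "n \<ge> 1 \<Longrightarrow> PP n \<le> II n"
proof -
  assume n: "n \<ge> 1"
  have sub: "Sset n \<subseteq> boxK (2 * int n + 2)" using Sset_sub box_mono[of "int n" "2 * int n + 2"] by auto
  have "PP n = (\<Sum>x\<in>Sset n. aa x * phi n x)"
    unfolding PP_def by (intro sum.cong) (auto simp: phi_def Sset_def psi_one_small[OF n])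
  also have "\<dots> \<le> II n"
    unfolding II_def by (rule sum_mono2[OF box_finite sub]) (auto intro!: mult_nonneg_nonneg phi_nonneg simp: less_imp_le aa_pos)
  finally show ?thesis .
qed

lemma JJ_nonneg: "0 \<le> JJ n"
  unfolding JJ_def by (intro sum_nonneg mult_nonneg_nonneg phi_nonneg) (simp add: less_imp_le aa_pos)

lemma JJ_le_II: "JJ n \<le> II n"
proof -
  have sub: "Aset n \<subseteq> boxK (2 * int n + 2)" using Aset_sub box_mono[of "2 * int n" "2 * int n + 2"] by auto
  show ?thesis
    unfolding II_def JJ_def by (rule sum_mono2[OF box_finite sub]) (auto intro!: mult_nonneg_nonneg phi_nonneg simp: less_imp_le aa_pos)
qed

lemma JJ_le_PP: "n \<ge> 1 \<Longrightarrow> JJ n \<le> PP (2 * n) - PP (n - 1)"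
proof -
  assume n: "n \<ge> 1"
  have sub: "Aset n \<subseteq> Sset (2 * n) - Sset (n - 1)"
  proof
    fix x assume xA: "x \<in> Aset n"
    have "lattice_norm x \<le> real (2 * n)" using Aset_norm(2)[OF n xA] by simp
    moreover have "\<not> lattice_norm x \<le> real (n - 1)" using Aset_norm(1)[OF n xA] n by (simp add: of_nat_diff)
    ultimately show "x \<in> Sset (2 * n) - Sset (n - 1)" by (simp add: Sset_def)
  qed
  have ss: "Sset (n - 1) \<subseteq> Sset (2 * n)" by (auto simp: Sset_def)
  have "JJ n \<le> (\<Sum>x\<in>Aset n. aa x)"
    unfolding JJ_def by (intro sum_mono) (simp add: phi_le1 aa_pos less_imp_le mult_left_le)
  also have "\<dots> \<le> (\<Sum>x\<in>Sset (2 * n) - Sset (n - 1). aa x)"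
    by (rule sum_mono2) (use sub Sset_fin in \<open>auto simp: less_imp_le aa_pos\<close>)
  also have "\<dots> = PP (2 * n) - PP (n - 1)"
    unfolding PP_def by (rule sum_diff[OF Sset_fin ss])
  finally show ?thesis .
qed

lemma contradiction:
  assumes hq: "q \<le> (real CARD('d) - \<alpha>) / (real CARD('d) - 2)"
  shows False
proof -
  obtain K where K: "K > 0" and Kb: "\<And>n. n \<ge> 1 \<Longrightarrow> II n \<le> K * JJ n powr (1/q)"
    using est_final[OF hq] by blast
  define M where "M = K powr (q / (q - 1))"
  have a0: "aa 0 > 0" by (rule aa_pos)
  have IIpos: "II n > 0" if "n \<ge> 1" for n using PP_ge[of n] PP_le_II[OF that] a0 by linarith
  have IIb: "II n \<le> M" if n: "n \<ge> 1" for n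
  proof -
    have I0: "II n > 0" using IIpos[OF n] .
    have "II n powr (1/q) * II n powr (1 - 1/q) = II n"
      using I0 by (simp add: powr_add[symmetric])
    also have "\<dots> \<le> K * JJ n powr (1/q)" using Kb[OF n] .
    also have "\<dots> \<le> K * II n powr (1/q)"
      using K JJ_nonneg[of n] JJ_le_II[of n] q1 by (intro mult_left_mono powr_mono2) auto
    finally have "II n powr (1/q) * II n powr (1 - 1/q) \<le> II n powr (1/q) * K" by (simp add: mult.commute)
    then have h: "II n powr (1 - 1/q) \<le> K" using I0 by (simp add: mult_le_cancel_left_pos)
    have "II n = (II n powr (1 - 1/q)) powr (q / (q - 1))"
      using I0 q1 by (simp add: powr_powr field_simps)
    also have "\<dots> \<le> K powr (q / (q - 1))"
      using h q1 by (intro powr_mono2) auto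
    finally show ?thesis by (simp add: M_def)
  qed
  have PPb: "PP m \<le> M" for m
  proof (cases "m \<ge> 1")
    case True then show ?thesis using PP_le_II IIb by (meson order.trans)
  next
    case False
    then have "PP m \<le> PP 1" by (intro PP_mono) simp
    then show ?thesis using PP_le_II[of 1] IIb[of 1] by simp
  qed
  have PPnn: "0 \<le> PP m" for m using PP_ge[of m] a0 by linarith
  have "Bseq PP" by (rule BseqI'[where K = M]) (use PPb PPnn in simp)
  moreover have "\<forall>m n. m \<le> n \<longrightarrow> PP m \<le> PP n" using PP_mono by blast
  ultimately have "convergent PP" by (rule Bseq_mono_convergent)
  then have C: "Cauchy PP" by (rule convergent_Cauchy)
  define \<epsilon> where "\<epsilon> = (aa 0 / (2 * K)) powr q"
  have eps: "\<epsilon> > 0" using a0 K by (simp add: \<epsilon>_def)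
  obtain N where N: "\<And>m n. m \<ge> N \<Longrightarrow> n \<ge> N \<Longrightarrow> dist (PP m) (PP n) < \<epsilon>"
    using metric_CauchyD[OF C eps] by blast
  define n where "n = Suc N"
  have n1: "n \<ge> 1" by (simp add: n_def)
  have "dist (PP (2 * n)) (PP (n - 1)) < \<epsilon>" by (rule N) (auto simp: n_def)
  then have "PP (2 * n) - PP (n - 1) < \<epsilon>" by (simp add: dist_real_def)
  then have Jlt: "JJ n \<le> \<epsilon>" using JJ_le_PP[OF n1] by linarith
  have "JJ n powr (1/q) \<le> \<epsilon> powr (1/q)" using Jlt JJ_nonneg q1 by (intro powr_mono2) auto
  also have "\<epsilon> powr (1/q) = aa 0 / (2 * K)" using a0 K q1 by (simp add: \<epsilon>_def powr_powr)
  finally have P: "JJ n powr (1/q) \<le> aa 0 / (2 * K)" .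
  have "K * JJ n powr (1/q) \<le> K * (aa 0 / (2 * K))" by (rule mult_left_mono[OF P]) (use K in simp)
  also have "\<dots> = aa 0 / 2" using K by simp
  finally have "II n \<le> aa 0 / 2" using Kb[OF n1] by linarith
  moreover have "aa 0 \<le> II n" using PP_ge[of n] PP_le_II[OF n1] by linarith
  ultimately show False using a0 by linarith
qed

end

theorem theorem7p4:
  fixes \<alpha> q :: real
  assumes "CARD('d) \<ge> 3"
    and "\<alpha> < 2"
    and "1 < q"
    and "q \<le> (real CARD('d) - \<alpha>) / (real CARD('d) - 2)"
  shows "\<not> (\<exists>u :: int ^ 'd \<Rightarrow> real. (\<forall>x. u x > 0) \<and>
            (\<forall>x. lattice_laplacian u x + (1 + lattice_norm x) powr (- \<alpha>) * (u x) powr q \<le> 0))"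
proof
  assume "\<exists>u :: int ^ 'd \<Rightarrow> real. (\<forall>x. u x > 0) \<and>
            (\<forall>x. lattice_laplacian u x + (1 + lattice_norm x) powr (- \<alpha>) * (u x) powr q \<le> 0)"
  then obtain u :: "int ^ 'd \<Rightarrow> real" where u: "\<forall>x. u x > 0"
    "\<forall>x. lattice_laplacian u x + (1 + lattice_norm x) powr (- \<alpha>) * (u x) powr q \<le> 0" by blast
  define s where "s = nat \<lceil>q / (q - 1)\<rceil> + 2"
  have s2: "s \<ge> 2" by (simp add: s_def)
  have sq: "real s * (q - 1) \<ge> q"
  proof -
    have "q / (q - 1) \<le> real s" unfolding s_def by linarith
    then show ?thesis using assms(3) by (simp add: divide_le_eq)
  qed
  interpret LV u \<alpha> q s
    using assms(1,3) u s2 sq by unfold_locales auto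
  show False by (rule contradiction[OF assms(4)])
qed


end
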